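(* Let $n$ be a positive integer, $\varphi$ a nonconstant analytic self-map of $\mathbb D$ with $\|\varphi\|_\infty<1$, and $\psi\in H^\infty$. Then for every real $b$ with $\|\varphi\|_\infty\le b<1$, $$\|D_{\psi,\varphi,n}\|_{-1}\le n!\,\|\psi\|_\infty\sqrt{\frac{b+|\varphi(0)|}{b-|\varphi(0)|}}\binom{N}{n}b^{N-n},\qquad N=\Big\lfloor\frac{n}{1-b}\Big\rfloor.$$ In particular, if $\|\varphi\|_\infty\le\frac{1}{n+1}$ and $\varphi(0)=0$, then $\|D_{\varphi,n}\|_{-1}=n!$.
   Context: $H^2$ is the Hardy space of analytic $f$ on the open unit disk $\mathbb D$ with $\|f\|^2=\sup_{0<r<1}\frac1{2\pi}\int_0^{2\pi}|f(re^{i\theta})|^2d\theta<\infty$; $\|T\|_{-1}$ denotes the operator norm on $H^2$. $H^\infty$ is the space of bounded analytic functions on $\mathbb D$ with $\|f\|_\infty=\sup_{z\in\mathbb D}|f(z)|$. $D_{\psi,\varphi,n}f=\psi\cdot(f^{(n)}\circ\varphi)$ and $D_{\varphi,n}f=f^{(n)}\circ\varphi$. $\lfloor\cdot\rfloor$ is the greatest integer function. *)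

theory Defs
  imports "HOL-Analysis.Analysis"
begin

definition h2_mean :: "(complex \<Rightarrow> complex) \<Rightarrow> real \<Rightarrow> real" where
  "h2_mean f r = (1 / (2 * pi)) *
     integral {0..2*pi} (\<lambda>t. (cmod (f (complex_of_real r * exp (\<i> * complex_of_real t)))) ^ 2)"

definition in_H2 :: "(complex \<Rightarrow> complex) \<Rightarrow> bool" where
  "in_H2 f \<longleftrightarrow> f holomorphic_on ball 0 1 \<and> bdd_above (h2_mean f ` {0<..<1})"

definition h2_norm :: "(complex \<Rightarrow> complex) \<Rightarrow> real" where
  "h2_norm f = sqrt (SUP r\<in>{0<..<1}. h2_mean f r)"

definition h2_opnorm :: "((complex \<Rightarrow> complex) \<Rightarrow> (complex \<Rightarrow> complex)) \<Rightarrow> ereal" where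
  "h2_opnorm T = (SUP f\<in>{f. in_H2 f \<and> h2_norm f \<le> 1}.
       (if in_H2 (T f) then ereal (h2_norm (T f)) else \<infinity>))"

definition in_Hinf :: "(complex \<Rightarrow> complex) \<Rightarrow> bool" where
  "in_Hinf f \<longleftrightarrow> f holomorphic_on ball 0 1 \<and> bounded (f ` ball 0 1)"

definition hinf_norm :: "(complex \<Rightarrow> complex) \<Rightarrow> real" where
  "hinf_norm f = (SUP z\<in>ball 0 1. cmod (f z))"

definition wcd_op :: "(complex \<Rightarrow> complex) \<Rightarrow> (complex \<Rightarrow> complex) \<Rightarrow> nat
     \<Rightarrow> (complex \<Rightarrow> complex) \<Rightarrow> (complex \<Rightarrow> complex)" where
  "wcd_op \<psi> \<phi> n f = (\<lambda>z. \<psi> z * (deriv ^^ n) f (\<phi> z))"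

definition cd_op :: "(complex \<Rightarrow> complex) \<Rightarrow> nat
     \<Rightarrow> (complex \<Rightarrow> complex) \<Rightarrow> (complex \<Rightarrow> complex)" where
  "cd_op \<phi> n f = (\<lambda>z. (deriv ^^ n) f (\<phi> z))"

end

theory Submission
  imports Defs "HOL-Complex_Analysis.Complex_Analysis"
begin

lemma circ_has_integral:
  assumes "(G has_contour_integral I) (circlepath 0 r)"
  shows "((\<lambda>t. G (of_real r * cis t) * of_real r * \<i> * cis t) has_integral I) {0..2*pi}"
  using assms unfolding circlepath_def
  by (subst (asm) has_contour_integral_part_circlepath_iff) auto

lemma cauchy_circle:
  fixes F :: "complex \<Rightarrow> complex" and r :: real
  assumes "F holomorphic_on cball 0 r" "cmod w < r"
  shows "((\<lambda>t. F (of_real r * cis t) * (of_real r * cis t) / (of_real r * cis t - w))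
            has_integral (2*pi*F w)) {0..2*pi}"
proof -
  have "((\<lambda>u. F u/(u-w)) has_contour_integral (2 * of_real pi * \<i> * F w)) (circlepath 0 r)"
    using assms by (intro Cauchy_integral_circlepath_simple) auto
  from has_integral_mult_left[OF circ_has_integral[OF this], of "-\<i>"]
  show ?thesis by (simp add: algebra_simps)
qed

lemma coeff_circle:
  fixes F :: "complex \<Rightarrow> complex" and r :: real
  assumes "F holomorphic_on cball 0 r" "r > 0"
  shows "((\<lambda>t. F (of_real r * cis t) / (of_real r * cis t)^k)
            has_integral (2*pi*(deriv ^^ k) F 0 / fact k)) {0..2*pi}"
proof -
  have "((\<lambda>u. F u / (u-0) ^ (Suc k)) has_contour_integral ((2 * pi * \<i>) / (fact k) * (deriv ^^ k) F 0))
           (circlepath 0 r)"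
    using assms by (intro Cauchy_has_contour_integral_higher_derivative_circlepath)
       (auto simp: holomorphic_on_imp_continuous_on holomorphic_on_subset)
  from has_integral_mult_left[OF circ_has_integral[OF this], of "-\<i>"]
  show ?thesis using assms by (simp add: algebra_simps)
qed


definition pk :: "real \<Rightarrow> complex \<Rightarrow> real \<Rightarrow> real" where
  "pk \<rho> w t = (\<rho>^2 - cmod w ^2) / (cmod (of_real \<rho> * cis t - w))^2"

lemma norm_rcis [simp]: "cmod (complex_of_real \<rho> * cis t) = \<bar>\<rho>\<bar>"
  by (simp add: norm_mult)

lemma re_ratio:
  fixes z w :: complex assumes "z \<noteq> w"
  shows "Re ((z + w)/(z - w)) = (cmod z^2 - cmod w^2)/cmod (z-w)^2"
proof -
  have "Re ((z + w)/(z - w)) = (Re (z+w) * Re (z-w) + Im (z+w) * Im (z-w)) / cmod (z-w)^2"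
    by (simp add: Re_divide')
  also have "Re (z+w) * Re (z-w) + Im (z+w) * Im (z-w) = cmod z^2 - cmod w^2"
    unfolding cmod_power2 by (simp add: algebra_simps power2_eq_square)
  finally show ?thesis .
qed

lemma frac3:
  fixes A B x y :: complex assumes "A \<noteq> 0" "B \<noteq> 0"
  shows "(x * B + y * A - A * B) / (A * B) = x/A + y/B - 1"
  using assms by (simp add: field_simps)

lemma poisson_id:
  fixes z w :: complex assumes "z \<noteq> w"
  shows "of_real ((cmod z^2 - cmod w^2)/cmod (z - w)^2) = z/(z-w) + cnj z/(cnj z - cnj w) - 1"
proof -
  have d: "z - w \<noteq> 0" "cnj z - cnj w \<noteq> 0" using assms by (auto simp: complex_eq_iff)
  have "of_real ((cmod z^2 - cmod w^2)/cmod (z - w)^2)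
      = (z * cnj z - w * cnj w) / ((z - w) * cnj (z - w))"
    by (simp only: of_real_divide of_real_diff complex_norm_square)
  also have "\<dots> = (z * (cnj z - cnj w) + cnj z * (z - w) - (z - w) * (cnj z - cnj w)) / ((z - w) * (cnj z - cnj w))"
    by (simp add: algebra_simps)
  also have "\<dots> = z/(z-w) + cnj z/(cnj z - cnj w) - 1"
    using frac3[OF d] by simp
  finally show ?thesis .
qed

lemma poisson_int:
  fixes h :: "complex \<Rightarrow> complex" and \<rho> :: real
  assumes hol: "h holomorphic_on cball 0 \<rho>" and w: "cmod w < \<rho>"
  shows "((\<lambda>t. of_real (pk \<rho> w t) * h (of_real \<rho> * cis t)) has_integral (2*pi*h w)) {0..2*pi}"
proof -
  have rho: "\<rho> > 0" using w norm_ge_zero[of w] by linarith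
  define k where "k z = h z * (of_real (\<rho>^2) / (of_real (\<rho>^2) - cnj w * z))" for z
  have nz: "of_real (\<rho>^2) - cnj w * z \<noteq> 0" if "z \<in> cball 0 \<rho>" for z
  proof
    assume "of_real (\<rho>^2) - cnj w * z = 0"
    then have "cmod (cnj w * z) = \<rho>^2" by (metis eq_iff_diff_eq_0 norm_of_real abs_power2 real_norm_def norm_power)
    moreover have "cmod (cnj w * z) < \<rho>^2"
    proof -
      have "cmod (cnj w * z) = cmod w * cmod z" by (simp add: norm_mult)
      also have "\<dots> \<le> cmod w * \<rho>" using that by (intro mult_left_mono) auto
      also have "\<dots> < \<rho> * \<rho>" using w rho by (intro mult_strict_right_mono) auto
      finally show ?thesis by (simp add: power2_eq_square)
    qed
    ultimately show False by simp
  qed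
  have kh: "k holomorphic_on cball 0 \<rho>"
    unfolding k_def using nz by (intro holomorphic_intros hol) auto
  have I1: "((\<lambda>t. h (of_real \<rho> * cis t) * (of_real \<rho> * cis t) / (of_real \<rho> * cis t - w))
            has_integral (2*pi*h w)) {0..2*pi}"
    using cauchy_circle[OF hol w] .
  have I2: "((\<lambda>t. k (of_real \<rho> * cis t)) has_integral (2*pi*h 0)) {0..2*pi}"
    using coeff_circle[OF kh rho, of 0] rho by (simp add: k_def)
  have I3: "((\<lambda>t. h (of_real \<rho> * cis t)) has_integral (2*pi*h 0)) {0..2*pi}"
    using coeff_circle[OF hol rho, of 0] by simp
  have I: "((\<lambda>t. h (of_real \<rho> * cis t) * (of_real \<rho> * cis t) / (of_real \<rho> * cis t - w)
               + k (of_real \<rho> * cis t) - h (of_real \<rho> * cis t))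
            has_integral (2*pi*h w + 2*pi*h 0 - 2*pi*h 0)) {0..2*pi}"
    by (intro has_integral_diff has_integral_add I1 I2 I3)
  from I have I': "((\<lambda>t. h (of_real \<rho> * cis t) * (of_real \<rho> * cis t) / (of_real \<rho> * cis t - w)
               + k (of_real \<rho> * cis t) - h (of_real \<rho> * cis t))
            has_integral (2*pi*h w)) {0..2*pi}" by simp
  show ?thesis
  proof (rule has_integral_eq[OF _ I'])
    fix t
    define z where "z = complex_of_real \<rho> * cis t"
    have zn: "cmod z = \<rho>" using rho by (simp add: z_def)
    have zw: "z \<noteq> w" using zn w by auto
    have z0: "z \<noteq> 0" using zn rho by auto
    have sq: "complex_of_real (\<rho>^2) = z * cnj z" using zn complex_norm_square[of z] by simp
    have "complex_of_real (\<rho>^2) / (complex_of_real (\<rho>^2) - cnj w * z) = (z * cnj z) / (z * cnj z - cnj w * z)"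
      by (simp only: sq)
    also have "\<dots> = (z * cnj z) / (z * (cnj z - cnj w))" by (simp add: algebra_simps)
    also have "\<dots> = cnj z / (cnj z - cnj w)" using z0 by simp
    finally have "complex_of_real (\<rho>^2) / (complex_of_real (\<rho>^2) - cnj w * z) = cnj z / (cnj z - cnj w)" .
    then have "k z = h z * (cnj z / (cnj z - cnj w))" by (simp add: k_def)
    moreover have "of_real (pk \<rho> w t) = z/(z-w) + cnj z/(cnj z - cnj w) - 1"
      using poisson_id[OF zw] zn by (simp add: pk_def z_def)
    moreover have "h z * z / (z - w) = h z * (z / (z - w))" by simp
    ultimately show "h z * z / (z - w) + k z - h z = of_real (pk \<rho> w t) * h z"
      by (metis (no_types, lifting) diff_add_cancel add_diff_eq mult.commute ring_class.ring_distribs(1) mult.right_neutral right_diff_distrib')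
  qed
qed


lemma cont_pk:
  assumes "cmod w < \<rho>"
  shows "continuous_on S (\<lambda>t. pk \<rho> w t)"
proof -
  have "cmod (of_real \<rho> * cis t - w) \<noteq> 0" for t
    using assms by auto
  then show ?thesis unfolding pk_def by (intro continuous_intros) auto
qed

lemma cont_gcirc:
  fixes g :: "complex \<Rightarrow> complex"
  assumes "continuous_on (cball 0 \<rho>) g" "\<rho> \<ge> 0"
  shows "continuous_on S (\<lambda>t. g (of_real \<rho> * cis t))"
  apply (rule continuous_on_compose2[OF assms(1)])
   apply (intro continuous_intros)
  using assms(2) by (auto simp: norm_mult)

lemma submean:
  fixes g :: "complex \<Rightarrow> complex" and \<rho> :: real
  assumes hol: "g holomorphic_on cball 0 \<rho>" and w: "cmod w < \<rho>"
  shows "2*pi * cmod (g w)^2 \<le> integral {0..2*pi} (\<lambda>t. pk \<rho> w t * cmod (g (of_real \<rho> * cis t))^2)"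
proof -
  define c where "c = g w"
  define J where "J = integral {0..2*pi} (\<lambda>t. pk \<rho> w t * cmod (g (of_real \<rho> * cis t))^2)"
  have A: "((\<lambda>t. of_real (pk \<rho> w t) * g (of_real \<rho> * cis t)) has_integral (2*pi*c)) {0..2*pi}"
    unfolding c_def by (rule poisson_int[OF hol w])
  have "((\<lambda>t. of_real (pk \<rho> w t) * (\<lambda>_. 1::complex) (of_real \<rho> * cis t)) has_integral (2*pi*(\<lambda>_. 1) w)) {0..2*pi}"
    using poisson_int[OF _ w, of "\<lambda>_. 1"] by simp
  from has_integral_Re[OF this]
  have B: "((\<lambda>t. pk \<rho> w t) has_integral (2*pi)) {0..2*pi}" by simp
  have re: "Re (cnj c * (2*pi*c)) = 2*pi*cmod c^2"
    unfolding cmod_power2 by (simp add: algebra_simps power2_eq_square)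
  have C: "((\<lambda>t. Re (cnj c * (of_real (pk \<rho> w t) * g (of_real \<rho> * cis t)))) has_integral (2*pi*cmod c^2)) {0..2*pi}"
    using has_integral_Re[OF has_integral_mult_right[OF A, of "cnj c"]] by (simp only: re)
  have contg: "continuous_on (cball 0 \<rho>) g" using hol by (rule holomorphic_on_imp_continuous_on)
  have rho: "\<rho> \<ge> 0" using w norm_ge_zero[of w] by linarith
  have "(\<lambda>t. pk \<rho> w t * cmod (g (of_real \<rho> * cis t))^2) integrable_on {0..2*pi}"
    by (intro integrable_continuous_interval continuous_intros cont_pk[OF w] cont_gcirc[OF contg rho])
  then have D: "((\<lambda>t. pk \<rho> w t * cmod (g (of_real \<rho> * cis t))^2) has_integral J) {0..2*pi}"
    unfolding J_def by (rule integrable_integral)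
  have E: "((\<lambda>t. pk \<rho> w t * cmod (g (of_real \<rho> * cis t))^2
               - 2 * Re (cnj c * (of_real (pk \<rho> w t) * g (of_real \<rho> * cis t)))
               + cmod c ^2 * pk \<rho> w t)
        has_integral (J - 2 * (2*pi*cmod c^2) + cmod c^2 * (2*pi))) {0..2*pi}"
    by (intro has_integral_add has_integral_diff D has_integral_mult_right B C)
  have "0 \<le> J - 2 * (2*pi*cmod c^2) + cmod c^2 * (2*pi)"
  proof (rule has_integral_nonneg[OF E])
    fix t
    define a where "a = g (of_real \<rho> * cis t)"
    have pk0: "pk \<rho> w t \<ge> 0" unfolding pk_def using w
      by (intro divide_nonneg_nonneg) (auto intro!: power_mono)
    have "pk \<rho> w t * cmod a^2 - 2 * Re (cnj c * (of_real (pk \<rho> w t) * a)) + cmod c^2 * pk \<rho> w t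
          = pk \<rho> w t * cmod (a - c)^2"
      unfolding cmod_power2 by (simp add: power2_eq_square algebra_simps)
    also have "\<dots> \<ge> 0" using pk0 by simp
    finally show "0 \<le> pk \<rho> w t * cmod (g (of_real \<rho> * cis t))^2
               - 2 * Re (cnj c * (of_real (pk \<rho> w t) * g (of_real \<rho> * cis t)))
               + cmod c ^2 * pk \<rho> w t" by (simp add: a_def)
  qed
  then show ?thesis unfolding J_def[symmetric] c_def[symmetric] by simp
qed



lemma harnack:
  assumes "cmod a < \<rho>"
  shows "pk \<rho> a t \<le> (\<rho> + cmod a) / (\<rho> - cmod a)"
proof -
  have d: "\<rho> - cmod a \<le> cmod (of_real \<rho> * cis t - a)"
    using norm_triangle_ineq2[of "of_real \<rho> * cis t" a] assms by auto
  have "pk \<rho> a t \<le> (\<rho>^2 - cmod a^2) / (\<rho> - cmod a)^2"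
    unfolding pk_def using assms d power_mono[of "cmod a" \<rho> 2]
    by (intro divide_left_mono power_mono mult_pos_pos) (auto simp: abs_square_less_1 power_strict_mono intro!: power_strict_mono)
  also have "\<dots> = (\<rho> + cmod a) / (\<rho> - cmod a)"
  proof -
    have "\<rho>^2 - cmod a^2 = (\<rho> + cmod a) * (\<rho> - cmod a)" by (simp add: power2_eq_square algebra_simps)
    moreover have "(\<rho> - cmod a)^2 = (\<rho> - cmod a) * (\<rho> - cmod a)" by (simp add: power2_eq_square)
    ultimately show ?thesis using assms by simp
  qed
  finally show ?thesis .
qed


lemma pk_mean:
  fixes u :: "complex \<Rightarrow> complex"
  assumes uh: "u holomorphic_on ball 0 1" and ub: "\<And>z. z \<in> ball 0 1 \<Longrightarrow> cmod (u z) < \<rho>"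
    and r: "0 < r" "r < 1"
  shows "((\<lambda>s. pk \<rho> (u (of_real r * cis s)) t) has_integral (2*pi*pk \<rho> (u 0) t)) {0..2*pi}"
proof -
  define \<zeta> where "\<zeta> = of_real \<rho> * cis t"
  have rho: "\<rho> > 0" using ub[of 0] by simp (meson norm_ge_zero le_less_trans)
  have zn: "cmod \<zeta> = \<rho>" using rho by (simp add: \<zeta>_def)
  define K where "K z = (\<zeta> + u z) / (\<zeta> - u z)" for z
  have nz: "\<zeta> - u z \<noteq> 0" if "z \<in> ball 0 1" for z
    using ub[OF that] zn by auto
  have "K holomorphic_on ball 0 1" unfolding K_def using nz
    by (intro holomorphic_intros uh) auto
  then have Kh: "K holomorphic_on cball 0 r" by (rule holomorphic_on_subset) (use r in auto)
  from has_integral_Re[OF coeff_circle[OF Kh r(1), of 0]]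
  have I: "((\<lambda>s. Re (K (of_real r * cis s))) has_integral (2*pi*Re (K 0))) {0..2*pi}" by simp
  have re: "Re (K z) = pk \<rho> (u z) t" if "z \<in> ball 0 1" for z
  proof -
    have "\<zeta> \<noteq> u z" using nz[OF that] by simp
    from re_ratio[OF this] show ?thesis by (simp add: K_def pk_def zn \<zeta>_def)
  qed
  have "r * cis s \<in> ball 0 1" for s using r by (simp add: norm_mult)
  with I show ?thesis using re[of 0] re by (simp add: re)
qed

lemma comp_mean:
  fixes g u :: "complex \<Rightarrow> complex"
  assumes gh: "g holomorphic_on cball 0 \<rho>" and uh: "u holomorphic_on ball 0 1"
    and ub: "\<And>z. z \<in> ball 0 1 \<Longrightarrow> cmod (u z) < \<rho>" and r: "0 < r" "r < 1"
  shows "integral {0..2*pi} (\<lambda>s. cmod (g (u (of_real r * cis s)))^2)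
     \<le> (\<rho> + cmod (u 0)) / (\<rho> - cmod (u 0)) * integral {0..2*pi} (\<lambda>t. cmod (g (of_real \<rho> * cis t))^2)"
proof -
  define Q where "Q s = u (of_real r * cis s)" for s
  define G where "G t = cmod (g (of_real \<rho> * cis t))^2" for t
  define F where "F s t = pk \<rho> (Q s) t * G t" for s t
  define C where "C = (\<rho> + cmod (u 0)) / (\<rho> - cmod (u 0))"
  have rho: "\<rho> > 0" using ub[of 0] by simp (meson norm_ge_zero le_less_trans)
  have inb: "of_real r * cis s \<in> ball 0 1" for s using r by (simp add: norm_mult)
  have Qb: "cmod (Q s) < \<rho>" for s unfolding Q_def using ub[OF inb] .
  have contu: "continuous_on (ball 0 1) u" using uh by (rule holomorphic_on_imp_continuous_on)
  have contQ: "continuous_on S (\<lambda>p. Q (f p))" if "continuous_on S f" for S and f :: "'a::topological_space \<Rightarrow> real"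
    unfolding Q_def
    apply (rule continuous_on_compose2[OF contu])
     apply (intro continuous_intros that)
    using inb by auto
  have contg: "continuous_on (cball 0 \<rho>) g" using gh by (rule holomorphic_on_imp_continuous_on)
  have contG: "continuous_on S (\<lambda>p. G (f p))" if "continuous_on S f" for S and f :: "'a::topological_space \<Rightarrow> real"
    unfolding G_def
    apply (intro continuous_intros)
    apply (rule continuous_on_compose2[OF contg])
     apply (intro continuous_intros that)
    using rho by (auto simp: norm_mult)
  have contF: "continuous_on S (\<lambda>p. F (f1 p) (f2 p))"
    if "continuous_on S f1" "continuous_on S f2" for S and f1 f2 :: "'a::topological_space \<Rightarrow> real"
  proof -
    have "cmod (of_real \<rho> * cis (f2 p) - Q (f1 p)) \<noteq> 0" for p
      using Qb[of "f1 p"] rho by (metis eq_iff_diff_eq_0 norm_eq_zero norm_rcis abs_of_pos less_irrefl)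
    then show ?thesis unfolding F_def pk_def
      by (intro continuous_intros contQ contG that) auto
  qed
  have contF2: "continuous_on S (\<lambda>(s,t). F s t)" for S
  proof -
    have "continuous_on S (\<lambda>p. F (fst p) (snd p))"
      by (intro contF continuous_intros)
    then show ?thesis by (simp add: case_prod_beta')
  qed
  have a: "cmod (g (Q s))^2 \<le> 1/(2*pi) * integral {0..2*pi} (F s)" for s
    using submean[OF gh Qb[of s]] unfolding F_def G_def by (simp add: field_simps)
  have intL: "(\<lambda>s. cmod (g (Q s))^2) integrable_on {0..2*pi}"
  proof -
    have "continuous_on {0..2*pi} (\<lambda>s. cmod (g (Q s))^2)"
      apply (intro continuous_intros)
      apply (rule continuous_on_compose2[OF contg])
       apply (intro contQ continuous_intros)
      using Qb by (auto simp: less_imp_le)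
    then show ?thesis by (rule integrable_continuous_interval)
  qed
  have contI: "continuous_on UNIV (\<lambda>s. integral (cbox 0 (2*pi)) (F s))"
    by (rule integral_continuous_on_param) (use contF2 in auto)
  have intR: "(\<lambda>s. 1/(2*pi) * integral {0..2*pi} (F s)) integrable_on {0..2*pi}"
    using contI by (intro integrable_continuous_interval continuous_intros) (auto intro: continuous_on_subset)
  have b: "integral {0..2*pi} (\<lambda>s. cmod (g (Q s))^2) \<le> integral {0..2*pi} (\<lambda>s. 1/(2*pi) * integral {0..2*pi} (F s))"
    by (rule integral_le[OF intL intR a])
  have c: "integral {0..2*pi} (\<lambda>s. integral {0..2*pi} (F s)) = integral {0..2*pi} (\<lambda>t. integral {0..2*pi} (\<lambda>s. F s t))"
    using integral_swap_continuous[of 0 0 "2*pi" "2*pi" F] contF2 by simp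
  have d: "integral {0..2*pi} (\<lambda>s. F s t) = 2*pi * (pk \<rho> (u 0) t * G t)" for t
  proof -
    have "((\<lambda>s. pk \<rho> (Q s) t * G t) has_integral (2*pi*pk \<rho> (u 0) t) * G t) {0..2*pi}"
      unfolding Q_def by (intro has_integral_mult_left pk_mean uh ub r) auto
    from integral_unique[OF this] show ?thesis unfolding F_def by (simp add: mult.assoc)
  qed
  have e: "integral {0..2*pi} (\<lambda>t. pk \<rho> (u 0) t * G t) \<le> integral {0..2*pi} (\<lambda>t. C * G t)"
  proof (rule integral_le)
    have "cmod (u 0) < \<rho>" using ub[of 0] by simp
    then show "(\<lambda>t. pk \<rho> (u 0) t * G t) integrable_on {0..2*pi}"
      by (intro integrable_continuous_interval continuous_intros cont_pk contG)
    show "(\<lambda>t. C * G t) integrable_on {0..2*pi}"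
      by (intro integrable_continuous_interval continuous_intros contG)
    fix t show "pk \<rho> (u 0) t * G t \<le> C * G t"
      unfolding C_def using harnack[OF \<open>cmod (u 0) < \<rho>\<close>, of t]
      by (intro mult_right_mono) (auto simp: G_def)
  qed
  have "integral {0..2*pi} (\<lambda>s. cmod (g (Q s))^2) \<le> 1/(2*pi) * integral {0..2*pi} (\<lambda>s. integral {0..2*pi} (F s))"
    using b by simp
  also have "\<dots> = 1/(2*pi) * integral {0..2*pi} (\<lambda>t. 2*pi * (pk \<rho> (u 0) t * G t))"
    unfolding c d ..
  also have "\<dots> = integral {0..2*pi} (\<lambda>t. pk \<rho> (u 0) t * G t)"
    by simp
  also have "\<dots> \<le> integral {0..2*pi} (\<lambda>t. C * G t)" by (rule e)
  also have "\<dots> = C * integral {0..2*pi} G" by simp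
  finally show ?thesis unfolding C_def G_def Q_def .
qed



lemma zeta_sq: "(complex_of_real r * cis t)^j * cnj ((complex_of_real r * cis t)^j) = of_real (r^(2*j))"
proof -
  have "(complex_of_real r * cis t)^j * cnj ((complex_of_real r * cis t)^j)
       = of_real (cmod ((complex_of_real r * cis t)^j)^2)"
    by (simp only: complex_norm_square)
  also have "\<dots> = of_real (r^(2*j))"
  proof -
    have "(\<bar>r\<bar>^j)^2 = r^(2*j)" by (metis power2_abs power_abs power_mult mult.commute)
    then show ?thesis by (simp add: norm_power)
  qed
  finally show ?thesis .
qed

lemma ortho_gt:
  assumes r: "r > 0" and kj: "j < k"
  shows "((\<lambda>t. (complex_of_real r * cis t)^k * cnj ((complex_of_real r * cis t)^j)) has_integral 0) {0..2*pi}"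
proof -
  have "(\<lambda>z::complex. z^(k-j)) holomorphic_on cball 0 r" by (intro holomorphic_intros)
  from coeff_circle[OF this r, of 0]
  have "((\<lambda>t. (complex_of_real r * cis t)^(k-j)) has_integral 0) {0..2*pi}"
    using kj by (simp add: power_0_left)
  from has_integral_mult_left[OF this, of "of_real (r^(2*j))"]
  have "((\<lambda>t. (complex_of_real r * cis t)^(k-j) * of_real (r^(2*j))) has_integral 0) {0..2*pi}" by simp
  moreover have "(complex_of_real r * cis t)^k * cnj ((complex_of_real r * cis t)^j)
      = (complex_of_real r * cis t)^(k-j) * of_real (r^(2*j))" for t
  proof -
    have "(complex_of_real r * cis t)^k = (complex_of_real r * cis t)^(k-j) * (complex_of_real r * cis t)^j"
      using kj by (simp add: power_add[symmetric])
    then show ?thesis using zeta_sq[of r t j] by (simp add: mult.assoc)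
  qed
  ultimately show ?thesis by simp
qed

lemma ortho:
  assumes r: "r > 0"
  shows "((\<lambda>t. (complex_of_real r * cis t)^k * cnj ((complex_of_real r * cis t)^j))
     has_integral (if k = j then of_real (2*pi*r^(2*k)) else 0)) {0..2*pi}"
proof (cases k j rule: linorder_cases)
  case less
  from ortho_gt[OF r less] have "(cnj \<circ> (\<lambda>t. (complex_of_real r * cis t)^j * cnj ((complex_of_real r * cis t)^k)) has_integral cnj 0) {0..2*pi}"
    by (subst has_integral_cnj) simp
  then show ?thesis using less by (simp add: o_def mult.commute)
next
  case equal
  have "((\<lambda>t. of_real (r^(2*j)) :: complex) has_integral of_real (2*pi*r^(2*j))) {0..2*pi}"
    using has_integral_const_real[of "of_real (r^(2*j)) :: complex" 0 "2*pi"] by (simp add: scaleR_conv_of_real)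
  then have "((\<lambda>t. (complex_of_real r * cis t)^j * cnj ((complex_of_real r * cis t)^j)) has_integral of_real (2*pi*r^(2*j))) {0..2*pi}"
    by (simp only: zeta_sq)
  then show ?thesis unfolding equal by (simp only: if_P[OF refl])
next
  case greater
  then show ?thesis using ortho_gt[OF r greater] by simp
qed

definition coef :: "(complex \<Rightarrow> complex) \<Rightarrow> nat \<Rightarrow> complex" where
  "coef F k = (deriv ^^ k) F 0 / fact k"

lemma coef_int:
  fixes F :: "complex \<Rightarrow> complex"
  assumes hol: "F holomorphic_on cball 0 r" and r: "r > 0"
  shows "((\<lambda>t. F (complex_of_real r * cis t) * cnj ((complex_of_real r * cis t)^j))
     has_integral (complex_of_real (2*pi) * coef F j * complex_of_real r ^ (2*j))) {0..2*pi}"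
proof -
  from has_integral_mult_left[OF coeff_circle[OF hol r, of j], of "of_real (r^(2*j))"]
  have I: "((\<lambda>t. F (complex_of_real r * cis t) / (complex_of_real r * cis t)^j * of_real (r^(2*j)))
     has_integral (complex_of_real (2*pi) * coef F j * complex_of_real r ^ (2*j))) {0..2*pi}" by (simp add: coef_def)
  have eq: "F (complex_of_real r * cis t) / (complex_of_real r * cis t)^j * of_real (r^(2*j)) =
      F (complex_of_real r * cis t) * cnj ((complex_of_real r * cis t)^j)" for t
  proof -
    have nz: "(complex_of_real r * cis t)^j \<noteq> 0" using r by simp
    have "cnj ((complex_of_real r * cis t)^j) = of_real (r^(2*j)) / (complex_of_real r * cis t)^j"
      using zeta_sq[of r t j] nz by (simp add: field_simps)
    then show ?thesis by simp
  qed
  show ?thesis using I[unfolded eq] by (simp only: of_real_power)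
qed


lemma cnj_mult_self: "cnj c * c = complex_of_real (cmod c ^ 2)"
  by (subst complex_norm_square) (simp add: mult.commute)

lemma pars_decomp:
  fixes F :: "complex \<Rightarrow> complex" and r :: real
  assumes hol: "F holomorphic_on cball 0 r" and r: "r > 0"
  shows "integral {0..2*pi} (\<lambda>t. cmod (F (complex_of_real r * cis t))^2)
     = 2*pi * (\<Sum>k<K. cmod (coef F k)^2 * r^(2*k))
       + integral {0..2*pi} (\<lambda>t. cmod (F (complex_of_real r * cis t)
            - (\<Sum>k<K. coef F k * (complex_of_real r * cis t)^k))^2)"
proof -
  define z where "z t = complex_of_real r * cis t" for t
  define S where "S t = (\<Sum>k<K. coef F k * (z t)^k)" for t
  define T where "T = (\<Sum>k<K. cmod (coef F k)^2 * r^(2*k))"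
  define J where "J = integral {0..2*pi} (\<lambda>t. cmod (F (z t))^2)"
  have A0: "((\<lambda>t. \<Sum>j<K. cnj (coef F j) * (F (z t) * cnj ((z t)^j)))
      has_integral (\<Sum>j<K. cnj (coef F j) * (complex_of_real (2*pi) * coef F j * complex_of_real r ^ (2*j)))) {0..2*pi}"
    unfolding z_def by (intro has_integral_sum has_integral_mult_right coef_int hol r) auto
  have pw: "cnj c * (complex_of_real (2*pi) * c * complex_of_real r ^ (2*j)) =
      complex_of_real (2*pi) * complex_of_real (cmod c^2 * r^(2*j))" for c j
    using complex_norm_square[of c] by (simp add: mult_ac)
  have "(\<Sum>j<K. cnj (coef F j) * (complex_of_real (2*pi) * coef F j * complex_of_real r ^ (2*j))) = of_real (2*pi*T)"
    unfolding pw T_def by (simp add: sum_distrib_left)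
  moreover have "(\<Sum>j<K. cnj (coef F j) * (F (z t) * cnj ((z t)^j))) = F (z t) * cnj (S t)" for t
    by (simp add: S_def sum_distrib_left mult_ac)
  ultimately have A: "((\<lambda>t. F (z t) * cnj (S t)) has_integral of_real (2*pi*T)) {0..2*pi}"
    using A0 by simp
  have B0: "((\<lambda>t. \<Sum>k<K. \<Sum>j<K. (coef F k * cnj (coef F j)) * ((z t)^k * cnj ((z t)^j)))
      has_integral (\<Sum>k<K. \<Sum>j<K. (coef F k * cnj (coef F j)) *
          (if k = j then of_real (2*pi*r^(2*k)) else 0))) {0..2*pi}"
    unfolding z_def by (intro has_integral_sum has_integral_mult_right ortho r) auto
  have "(\<Sum>k<K. \<Sum>j<K. (coef F k * cnj (coef F j)) *
          (if k = j then of_real (2*pi*r^(2*k)) else (0::complex))) = of_real (2*pi*T)"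
  proof -
    have "(\<Sum>k<K. \<Sum>j<K. (coef F k * cnj (coef F j)) *
          (if k = j then of_real (2*pi*r^(2*k)) else (0::complex)))
        = (\<Sum>k<K. (coef F k * cnj (coef F k)) * of_real (2*pi*r^(2*k)))"
      by (intro sum.cong refl) (simp add: if_distrib cong: if_cong)
    also have "\<dots> = (\<Sum>k<K. complex_of_real (2*pi) * complex_of_real (cmod (coef F k)^2 * r^(2*k)))"
      by (intro sum.cong refl) (use complex_norm_square in \<open>simp add: mult_ac\<close>)
    also have "\<dots> = of_real (2*pi*T)"
      unfolding T_def by (simp add: sum_distrib_left)
    finally show ?thesis .
  qed
  moreover have "(\<Sum>k<K. \<Sum>j<K. (coef F k * cnj (coef F j)) * ((z t)^k * cnj ((z t)^j))) = S t * cnj (S t)" for t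
    by (simp add: S_def sum_product mult_ac)
  ultimately have B: "((\<lambda>t. S t * cnj (S t)) has_integral of_real (2*pi*T)) {0..2*pi}"
    using B0 by simp
  have contF: "continuous_on (cball 0 r) F" using hol by (rule holomorphic_on_imp_continuous_on)
  have "(\<lambda>t. cmod (F (z t))^2) integrable_on {0..2*pi}"
    unfolding z_def using r by (intro integrable_continuous_interval continuous_intros cont_gcirc[OF contF]) auto
  then have D: "((\<lambda>t. cmod (F (z t))^2) has_integral J) {0..2*pi}"
    unfolding J_def by (rule integrable_integral)
  have E: "((\<lambda>t. cmod (F (z t))^2 - 2 * Re (F (z t) * cnj (S t)) + Re (S t * cnj (S t)))
      has_integral (J - 2 * Re (of_real (2*pi*T)) + Re (of_real (2*pi*T)))) {0..2*pi}"
    by (intro has_integral_add has_integral_diff has_integral_mult_right D has_integral_Re A B)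
  have pt: "cmod (F (z t))^2 - 2 * Re (F (z t) * cnj (S t)) + Re (S t * cnj (S t)) = cmod (F (z t) - S t)^2" for t
    unfolding cmod_power2 by (simp add: power2_eq_square algebra_simps)
  from E have "((\<lambda>t. cmod (F (z t) - S t)^2) has_integral (J - 2*pi*T)) {0..2*pi}"
    unfolding pt by (simp add: mult_ac)
  then have "integral {0..2*pi} (\<lambda>t. cmod (F (z t) - S t)^2) = J - 2*pi*T"
    by (rule integral_unique)
  then show ?thesis unfolding J_def T_def S_def z_def by simp
qed


lemma tail_bound:
  fixes F :: "complex \<Rightarrow> complex" and r R :: real
  assumes hol: "F holomorphic_on ball 0 R" and r: "0 < r" "r < R"
  obtains M q where "0 \<le> M" "0 \<le> q" "q < 1"
    "\<And>K t. cmod (F (complex_of_real r * cis t) - (\<Sum>k<K. coef F k * (complex_of_real r * cis t)^k)) \<le> M * q^K"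
proof -
  define r' where "r' = (r + R) / 2"
  have r': "r < r'" "r' < R" "0 < r'" using r by (auto simp: r'_def)
  have sub: "cball 0 r' \<subseteq> ball 0 R" using r' by auto
  have contF: "continuous_on (cball 0 r') F"
    using holomorphic_on_imp_continuous_on[OF holomorphic_on_subset[OF hol sub]] .
  have "bounded (F ` cball 0 r')"
    by (intro compact_imp_bounded compact_continuous_image contF) auto
  then obtain B where B: "\<And>z. z \<in> cball 0 r' \<Longrightarrow> cmod (F z) \<le> B"
    unfolding bounded_iff by blast
  have B0: "0 \<le> B" using B[of 0] r' by (auto intro: order_trans[OF norm_ge_zero])
  have holr': "F holomorphic_on ball 0 r'" using hol by (rule holomorphic_on_subset) (use r' in auto)
  have ck: "cmod (coef F k) \<le> B / r'^k" for k
  proof -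
    have "cmod ((deriv ^^ k) F 0) \<le> fact k * B / r'^k"
      by (rule Cauchy_inequality[OF holr' contF r'(3)]) (auto intro: B simp: dist_norm norm_minus_commute)
    then show ?thesis unfolding coef_def by (simp add: norm_divide field_simps)
  qed
  define q where "q = r / r'"
  have q: "0 \<le> q" "q < 1" using r r' by (auto simp: q_def)
  define M where "M = B / (1 - q)"
  have M0: "0 \<le> M" using B0 q by (simp add: M_def)
  show ?thesis
  proof (rule that[OF M0 q])
    fix K t
    define z where "z = complex_of_real r * cis t"
    have zn: "cmod z = r" using r by (simp add: z_def)
    have "z \<in> ball 0 R" using zn r by simp
    from holomorphic_power_series[OF hol this]
    have "(\<lambda>k. coef F k * z^k) sums F z" by (simp add: coef_def)
    from sums_split_initial_segment[OF this, of K]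
    have S: "(\<lambda>i. coef F (i + K) * z^(i + K)) sums (F z - (\<Sum>k<K. coef F k * z^k))" .
    have bd: "cmod (coef F (i + K) * z^(i + K)) \<le> B * q^K * q^i" for i
    proof -
      have "cmod (coef F (i + K) * z^(i + K)) = cmod (coef F (i + K)) * r^(i+K)"
        by (simp add: norm_mult norm_power zn)
      also have "\<dots> \<le> B / r'^(i+K) * r^(i+K)"
        using ck r by (intro mult_right_mono) auto
      also have "\<dots> = B * q^(i+K)" by (simp add: q_def power_divide)
      also have "\<dots> = B * q^K * q^i" by (simp add: power_add mult_ac)
      finally show ?thesis .
    qed
    have sg: "summable (\<lambda>i. B * q^K * q^i)" using q by (intro summable_mult summable_geometric) auto
    have "cmod (F z - (\<Sum>k<K. coef F k * z^k)) \<le> (\<Sum>i. B * q^K * q^i)"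
      using norm_suminf_le[OF bd sg] sums_unique[OF S] by simp
    also have "\<dots> = B * q^K / (1 - q)" using q by (simp add: suminf_mult suminf_geometric)
    also have "\<dots> = M * q^K" by (simp add: M_def)
    finally show "cmod (F (complex_of_real r * cis t) - (\<Sum>k<K. coef F k * (complex_of_real r * cis t)^k)) \<le> M * q^K"
      by (simp add: z_def)
  qed
qed



lemma binom_step:
  fixes b :: real assumes "n \<le> m"
  shows "real (Suc m choose n) * b^(Suc m - n) * real (Suc m - n)
       = real (Suc m) * b * (real (m choose n) * b^(m - n))"
proof -
  have "(Suc m - n) * (Suc m choose n) = Suc m * (m choose n)"
    using binomial_absorb_comp[of "Suc m" n] by simp
  then have e: "real (Suc m - n) * real (Suc m choose n) = real (Suc m) * real (m choose n)"
    by (metis of_nat_mult)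
  have p: "b^(Suc m - n) = b * b^(m - n)" using assms by (simp add: Suc_diff_le)
  show ?thesis using e by (simp add: p mult_ac)
qed

lemma binom_max:
  fixes b :: real and n :: nat
  assumes b: "0 < b" "b < 1"
  defines "N \<equiv> nat \<lfloor>real n / (1 - b)\<rfloor>"
  shows "n \<le> N" and "\<And>m. n \<le> m \<Longrightarrow> real (m choose n) * b^(m - n) \<le> real (N choose n) * b^(N - n)"
proof -
  define t where "t m = real (m choose n) * b^(m - n)" for m
  have ge: "real n \<le> real n / (1 - b)" using b by (simp add: field_simps mult_left_le)
  then show nN: "n \<le> N" unfolding N_def by (simp add: le_nat_iff le_floor_iff)
  have key: "real (Suc m) \<le> real n / (1 - b) \<longleftrightarrow> Suc m \<le> N" for m
  proof -
    have "int (Suc m) \<le> \<lfloor>real n / (1 - b)\<rfloor> \<longleftrightarrow> real (Suc m) \<le> real n / (1 - b)"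
      by (simp only: le_floor_iff of_int_of_nat_eq)
    moreover have "Suc m \<le> N \<longleftrightarrow> int (Suc m) \<le> \<lfloor>real n / (1 - b)\<rfloor>"
      unfolding N_def by linarith
    ultimately show ?thesis by simp
  qed
  have cond: "real (Suc m - n) \<le> real (Suc m) * b \<longleftrightarrow> real (Suc m) \<le> real n / (1 - b)" if "n \<le> m" for m
    using b that by (simp add: of_nat_diff field_simps)
  have up: "t m \<le> t (Suc m)" if "n \<le> m" "Suc m \<le> N" for m
  proof -
    have pos: "real (Suc m - n) > 0" using that by simp
    have "real (Suc m - n) \<le> real (Suc m) * b" using cond[OF that(1)] key that(2) by simp
    then have "real (Suc m - n) * t m \<le> real (Suc m) * b * t m"
      by (intro mult_right_mono) (auto simp: t_def b(1) less_imp_le)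
    also have "\<dots> = t (Suc m) * real (Suc m - n)" using binom_step[OF that(1)] by (simp add: t_def)
    finally show ?thesis using pos by (simp add: mult.commute)
  qed
  have down: "t (Suc m) \<le> t m" if "N \<le> m" for m
  proof -
    have nm: "n \<le> m" using nN that by simp
    have pos: "real (Suc m - n) > 0" using nm by simp
    have "\<not> Suc m \<le> N" using that by simp
    then have "real (Suc m) * b < real (Suc m - n)" using cond[OF nm] key by simp
    then have "real (Suc m) * b * t m \<le> real (Suc m - n) * t m"
      by (intro mult_right_mono) (auto simp: t_def b(1) less_imp_le)
    moreover have "real (Suc m) * b * t m = t (Suc m) * real (Suc m - n)" using binom_step[OF nm] by (simp add: t_def)
    ultimately show ?thesis using pos by (simp add: mult.commute)
  qed
  fix m assume nm: "n \<le> m"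
  show "real (m choose n) * b^(m - n) \<le> real (N choose n) * b^(N - n)"
  proof (cases "m \<le> N")
    case True
    have "t m \<le> t N" using True
    proof (induction m rule: inc_induct)
      case base then show ?case by simp
    next
      case (step k) then show ?case using up[of k] nm by simp
    qed
    then show ?thesis by (simp add: t_def)
  next
    case False
    then have "N \<le> m" by simp
    then have "t m \<le> t N"
    proof (induction m rule: dec_induct)
      case base then show ?case by simp
    next
      case (step k) then show ?case using down[of k] by simp
    qed
    then show ?thesis by (simp add: t_def)
  qed
qed



lemma h2_mean_cis:
  "h2_mean f r = (1/(2*pi)) * integral {0..2*pi} (\<lambda>t. cmod (f (complex_of_real r * cis t))^2)"
  by (simp add: h2_mean_def cis_conv_exp)

lemma sum_le_h2mean:
  fixes f :: "complex \<Rightarrow> complex"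
  assumes hol: "f holomorphic_on ball 0 1" and r: "0 < r" "r < 1"
  shows "(\<Sum>k<K. cmod (coef f k)^2 * r^(2*k)) \<le> h2_mean f r"
proof -
  have holc: "f holomorphic_on cball 0 r" using hol by (rule holomorphic_on_subset) (use r in auto)
  have "0 \<le> integral {0..2*pi} (\<lambda>t. cmod (f (complex_of_real r * cis t)
            - (\<Sum>k<K. coef f k * (complex_of_real r * cis t)^k))^2)"
    by (cases "(\<lambda>t. cmod (f (complex_of_real r * cis t)
            - (\<Sum>k<K. coef f k * (complex_of_real r * cis t)^k))^2) integrable_on {0..2*pi}")
       (auto intro: integral_nonneg simp: not_integrable_integral)
  then have "2*pi*(\<Sum>k<K. cmod (coef f k)^2 * r^(2*k)) \<le> integral {0..2*pi} (\<lambda>t. cmod (f (complex_of_real r * cis t))^2)"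
    using pars_decomp[OF holc r(1), of K] by linarith
  then show ?thesis unfolding h2_mean_cis by (simp add: field_simps)
qed

lemma h2_mean_nonneg:
  fixes f :: "complex \<Rightarrow> complex"
  assumes hol: "f holomorphic_on ball 0 1" and r: "0 < r" "r < 1"
  shows "0 \<le> h2_mean f r"
  using sum_le_h2mean[OF assms, of 0] by simp

lemma h2_mean_le_norm:
  assumes H: "in_H2 f" and r: "0 < r" "r < 1"
  shows "h2_mean f r \<le> h2_norm f ^ 2"
proof -
  have hol: "f holomorphic_on ball 0 1" and bdd: "bdd_above (h2_mean f ` {0<..<1})"
    using H by (auto simp: in_H2_def)
  have le: "h2_mean f r \<le> (SUP r\<in>{0<..<1}. h2_mean f r)"
    by (rule cSUP_upper[OF _ bdd]) (use r in auto)
  moreover have "0 \<le> (SUP r\<in>{0<..<1}. h2_mean f r)"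
    using le h2_mean_nonneg[OF hol r] by linarith
  ultimately show ?thesis unfolding h2_norm_def by simp
qed

lemma coef_sum_le_norm:
  assumes H: "in_H2 f"
  shows "(\<Sum>k<K. cmod (coef f k)^2) \<le> h2_norm f ^ 2"
proof -
  have hol: "f holomorphic_on ball 0 1" using H by (auto simp: in_H2_def)
  have lim: "((\<lambda>r. \<Sum>k<K. cmod (coef f k)^2 * r^(2*k)) \<longlongrightarrow> (\<Sum>k<K. cmod (coef f k)^2 * 1^(2*k))) (at_left (1::real))"
    by (intro tendsto_intros)
  have ev: "eventually (\<lambda>r. (\<Sum>k<K. cmod (coef f k)^2 * r^(2*k)) \<le> h2_norm f ^ 2) (at_left (1::real))"
  proof -
    have "eventually (\<lambda>r. r \<in> {0<..<1}) (at_left (1::real))"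
      by (rule eventually_at_left_real) simp
    then show ?thesis
      by eventually_elim (use sum_le_h2mean[OF hol] h2_mean_le_norm[OF H] in \<open>auto intro: order_trans\<close>)
  qed
  have "(\<Sum>k<K. cmod (coef f k)^2 * 1^(2*k)) \<le> h2_norm f ^ 2"
    by (rule tendsto_upperbound[OF lim ev]) simp
  then show ?thesis by simp
qed


lemma h2mean_upper:
  fixes g :: "complex \<Rightarrow> complex"
  assumes hol: "g holomorphic_on ball 0 1" and b: "0 < b" "b < 1"
    and X: "\<And>K. (\<Sum>k<K. cmod (coef g k)^2 * b^(2*k)) \<le> X"
  shows "h2_mean g b \<le> X"
proof -
  obtain M q where Mq: "0 \<le> M" "0 \<le> q" "q < 1"
    "\<And>K t. cmod (g (complex_of_real b * cis t) - (\<Sum>k<K. coef g k * (complex_of_real b * cis t)^k)) \<le> M * q^K"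
    using tail_bound[OF hol b] by blast
  have holc: "g holomorphic_on cball 0 b" using hol by (rule holomorphic_on_subset) (use b in auto)
  have contg: "continuous_on (cball 0 b) g" using holc by (rule holomorphic_on_imp_continuous_on)
  have bound: "h2_mean g b \<le> X + (M * q^K)^2" for K
  proof -
    define E where "E t = cmod (g (complex_of_real b * cis t) - (\<Sum>k<K. coef g k * (complex_of_real b * cis t)^k))^2" for t
    have "E integrable_on {0..2*pi}" unfolding E_def
      using b by (intro integrable_continuous_interval continuous_intros cont_gcirc[OF contg]) auto
    then have "integral {0..2*pi} E \<le> integral {0..2*pi} (\<lambda>t. (M * q^K)^2)"
      by (rule integral_le) (auto simp: E_def intro!: power_mono Mq(4))
    also have "\<dots> = 2*pi*(M * q^K)^2" by simp
    finally have IE: "integral {0..2*pi} E \<le> 2*pi*(M * q^K)^2" .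
    have "h2_mean g b = (1/(2*pi)) * (2*pi * (\<Sum>k<K. cmod (coef g k)^2 * b^(2*k)) + integral {0..2*pi} E)"
      unfolding h2_mean_cis pars_decomp[OF holc b(1), of K] E_def ..
    also have "\<dots> = (\<Sum>k<K. cmod (coef g k)^2 * b^(2*k)) + integral {0..2*pi} E / (2*pi)"
      by (simp add: field_simps)
    also have "\<dots> \<le> X + (M * q^K)^2"
    proof -
      have "integral {0..2*pi} E / (2*pi) \<le> (M * q^K)^2"
        using IE pi_gt_zero by (simp add: divide_le_eq mult.commute)
      then show ?thesis using X[of K] by linarith
    qed
    finally show ?thesis .
  qed
  show ?thesis
  proof (rule ccontr)
    assume "\<not> h2_mean g b \<le> X"
    then have pos: "0 < h2_mean g b - X" by simp
    have "(\<lambda>K. M * q^K) \<longlonglongrightarrow> M * 0"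
      using Mq by (intro tendsto_intros LIMSEQ_power_zero) auto
    then have "(\<lambda>K. (M * q^K)^2) \<longlonglongrightarrow> (M * 0)^2" by (rule tendsto_power)
    then have l2: "(\<lambda>K. (M * q^K)^2) \<longlonglongrightarrow> 0" by simp
    have "eventually (\<lambda>K. (M * q^K)^2 < h2_mean g b - X) sequentially"
      by (rule order_tendstoD(2)[OF l2 pos])
    then obtain K where "(M * q^K)^2 < h2_mean g b - X" by (auto simp: eventually_sequentially)
    with bound[of K] show False by simp
  qed
qed

lemma coef_deriv:
  "coef ((deriv ^^ n) f) k = coef f (k + n) * (fact n * of_nat ((k + n) choose n))"
proof -
  have "(deriv ^^ k) ((deriv ^^ n) f) = (deriv ^^ (k + n)) f" by (simp add: funpow_add)
  moreover have "fact (k + n) = (fact k * (fact n * of_nat ((k + n) choose n)) :: complex)"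
  proof -
    have "fact n * fact k * ((k+n) choose n) = (fact (k+n) :: nat)"
      using binomial_fact_lemma[of n "k+n"] by simp
    from arg_cong[OF this, of "of_nat :: nat \<Rightarrow> complex"] show ?thesis
      by (simp add: mult_ac)
  qed
  ultimately show ?thesis unfolding coef_def by (simp add: field_simps)
qed


lemma sum_shift_le:
  fixes a :: "nat \<Rightarrow> real" assumes "\<And>k. 0 \<le> a k"
  shows "(\<Sum>k<K. a (k + n)) \<le> (\<Sum>k<K + n. a k)"
proof -
  have "(\<Sum>k<K. a (k + n)) = sum a ((\<lambda>k. k + n) ` {..<K})"
    by (simp add: sum.reindex inj_on_def)
  also have "\<dots> \<le> sum a {..<K + n}"
    by (rule sum_mono2) (auto simp: assms)
  finally show ?thesis .
qed

lemma deriv_mean_bound: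
  fixes n :: nat
  assumes H: "in_H2 f" and b: "0 < b" "b < 1"
  defines "N \<equiv> nat \<lfloor>real n / (1 - b)\<rfloor>"
  shows "h2_mean ((deriv ^^ n) f) b \<le> (fact n * (real (N choose n) * b^(N - n)))^2 * h2_norm f ^ 2"
proof -
  define Mx where "Mx = real (N choose n) * b^(N - n)"
  have hol: "f holomorphic_on ball 0 1" using H by (auto simp: in_H2_def)
  have holg: "(deriv ^^ n) f holomorphic_on ball 0 1"
    by (rule holomorphic_higher_deriv[OF hol]) auto
  show ?thesis unfolding Mx_def[symmetric]
  proof (rule h2mean_upper[OF holg b])
    fix K
    have trm: "cmod (coef ((deriv ^^ n) f) k)^2 * b^(2*k) \<le> (fact n * Mx)^2 * cmod (coef f (k + n))^2" for k
    proof -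
      have c: "cmod (coef ((deriv ^^ n) f) k) = cmod (coef f (k + n)) * (fact n * real ((k + n) choose n))"
        unfolding coef_deriv by (simp add: norm_mult)
      have "fact n * real ((k + n) choose n) * b^k \<le> fact n * Mx"
      proof -
        have "real ((k + n) choose n) * b^k \<le> Mx"
          using binom_max(2)[OF b, of n "k + n"] unfolding Mx_def N_def by simp
        then show ?thesis by (simp add: mult.assoc)
      qed
      then have "(fact n * real ((k + n) choose n) * b^k)^2 \<le> (fact n * Mx)^2"
        using b by (intro power_mono) auto
      then have "cmod (coef f (k + n))^2 * (fact n * real ((k + n) choose n) * b^k)^2
          \<le> cmod (coef f (k + n))^2 * (fact n * Mx)^2"
        by (intro mult_left_mono) auto
      moreover have "cmod (coef ((deriv ^^ n) f) k)^2 * b^(2*k)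
          = cmod (coef f (k + n))^2 * (fact n * real ((k + n) choose n) * b^k)^2"
        unfolding c by (simp add: power_mult_distrib power_mult mult_ac)
      ultimately show ?thesis by (simp add: mult_ac)
    qed
    have "(\<Sum>k<K. cmod (coef ((deriv ^^ n) f) k)^2 * b^(2*k)) \<le> (\<Sum>k<K. (fact n * Mx)^2 * cmod (coef f (k + n))^2)"
      by (rule sum_mono) (rule trm)
    also have "\<dots> = (fact n * Mx)^2 * (\<Sum>k<K. cmod (coef f (k + n))^2)"
      by (simp add: sum_distrib_left)
    also have "\<dots> \<le> (fact n * Mx)^2 * (\<Sum>k<K + n. cmod (coef f k)^2)"
      by (intro mult_left_mono sum_shift_le) auto
    also have "\<dots> \<le> (fact n * Mx)^2 * h2_norm f ^ 2"
      by (intro mult_left_mono coef_sum_le_norm[OF H]) auto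
    finally show "(\<Sum>k<K. cmod (coef ((deriv ^^ n) f) k)^2 * b^(2*k)) \<le> (fact n * Mx)^2 * h2_norm f ^ 2" .
  qed
qed



lemma h2_norm_nonneg:
  assumes H: "in_H2 f" shows "0 \<le> h2_norm f"
proof -
  have hol: "f holomorphic_on ball 0 1" and bdd: "bdd_above (h2_mean f ` {0<..<1})"
    using H by (auto simp: in_H2_def)
  have "h2_mean f (1/2) \<le> (SUP r\<in>{0<..<1}. h2_mean f r)"
    by (rule cSUP_upper[OF _ bdd]) auto
  moreover have "0 \<le> h2_mean f (1/2)" by (rule h2_mean_nonneg[OF hol]) auto
  ultimately show ?thesis unfolding h2_norm_def by simp
qed

lemma main_bound:
  fixes n :: nat and \<phi> \<psi> :: "complex \<Rightarrow> complex" and b Np :: real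
  assumes phi_hol: "\<phi> holomorphic_on ball 0 1"
    and ub: "\<And>z. z \<in> ball 0 1 \<Longrightarrow> cmod (\<phi> z) < b" and b1: "b < 1"
    and psi_hol: "\<psi> holomorphic_on ball 0 1"
    and psib: "\<And>z. z \<in> ball 0 1 \<Longrightarrow> cmod (\<psi> z) \<le> Np"
  defines "N \<equiv> nat \<lfloor>real n / (1 - b)\<rfloor>"
  shows "h2_opnorm (wcd_op \<psi> \<phi> n) \<le>
     ereal (fact n * Np * sqrt ((b + cmod (\<phi> 0)) / (b - cmod (\<phi> 0))) * (real (N choose n) * b^(N - n)))"
proof -
  define a where "a = cmod (\<phi> 0)"
  define C where "C = (b + a) / (b - a)"
  define Mx where "Mx = real (N choose n) * b^(N - n)"
  define B where "B = fact n * Np * sqrt C * Mx"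
  have ab: "a < b" using ub[of 0] by (simp add: a_def)
  have b0: "0 < b" using ab by (metis a_def norm_ge_zero le_less_trans)
  have a0: "0 \<le> a" by (simp add: a_def)
  have C0: "0 \<le> C" using ab a0 by (simp add: C_def)
  have Np0: "0 \<le> Np" using psib[of 0] by (auto intro: order_trans[OF norm_ge_zero])
  have Mx0: "0 \<le> Mx" using b0 by (simp add: Mx_def)
  have B0: "0 \<le> B" using Np0 C0 Mx0 by (simp add: B_def)
  have phi_ball: "\<phi> z \<in> ball 0 1" if "z \<in> ball 0 1" for z
    using ub[OF that] b1 by simp
  have main: "in_H2 (wcd_op \<psi> \<phi> n f) \<and> h2_norm (wcd_op \<psi> \<phi> n f) \<le> B"
    if H: "in_H2 f" and f1: "h2_norm f \<le> 1" for f
  proof -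
    define g where "g = (deriv ^^ n) f"
    have hol: "f holomorphic_on ball 0 1" using H by (simp add: in_H2_def)
    have holg: "g holomorphic_on ball 0 1" unfolding g_def
      by (rule holomorphic_higher_deriv[OF hol]) auto
    have T: "wcd_op \<psi> \<phi> n f = (\<lambda>z. \<psi> z * g (\<phi> z))" by (simp add: wcd_op_def g_def)
    have holgp: "(\<lambda>z. g (\<phi> z)) holomorphic_on ball 0 1"
    proof -
      have "\<phi> ` ball 0 1 \<subseteq> ball 0 1" using phi_ball by blast
      from holomorphic_on_compose_gen[OF phi_hol holg this] show ?thesis by (simp add: o_def)
    qed
    have holT: "(\<lambda>z. \<psi> z * g (\<phi> z)) holomorphic_on ball 0 1"
      by (intro holomorphic_intros psi_hol holgp)
    have gcb: "g holomorphic_on cball 0 b" using holg by (rule holomorphic_on_subset) (use b1 in auto)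
    have mean: "h2_mean (\<lambda>z. \<psi> z * g (\<phi> z)) r \<le> B^2" if r: "0 < r" "r < 1" for r
    proof -
      have inb: "complex_of_real r * cis t \<in> ball 0 1" for t using r by (simp add: norm_mult)
      have contp: "continuous_on (ball 0 1) \<psi>" using psi_hol by (rule holomorphic_on_imp_continuous_on)
      have contgp: "continuous_on (ball 0 1) (\<lambda>z. g (\<phi> z))" using holgp by (rule holomorphic_on_imp_continuous_on)
      have c1: "continuous_on {0..2*pi} (\<lambda>t. \<psi> (complex_of_real r * cis t))"
        by (rule continuous_on_compose2[OF contp]) (intro continuous_intros, use inb in auto)
      have c2: "continuous_on {0..2*pi} (\<lambda>t. g (\<phi> (complex_of_real r * cis t)))"
        by (rule continuous_on_compose2[OF contgp]) (intro continuous_intros, use inb in auto)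
      have "integral {0..2*pi} (\<lambda>t. cmod (\<psi> (complex_of_real r * cis t) * g (\<phi> (complex_of_real r * cis t)))^2)
          \<le> integral {0..2*pi} (\<lambda>t. Np^2 * cmod (g (\<phi> (complex_of_real r * cis t)))^2)"
      proof (rule integral_le)
        show "(\<lambda>t. cmod (\<psi> (complex_of_real r * cis t) * g (\<phi> (complex_of_real r * cis t)))^2) integrable_on {0..2*pi}"
          by (intro integrable_continuous_interval continuous_intros c1 c2)
        show "(\<lambda>t. Np^2 * cmod (g (\<phi> (complex_of_real r * cis t)))^2) integrable_on {0..2*pi}"
          by (intro integrable_continuous_interval continuous_intros c2)
        fix t
        have "cmod (\<psi> (complex_of_real r * cis t))^2 \<le> Np^2"
          using psib[OF inb[of t]] by (intro power_mono) auto
        then show "cmod (\<psi> (complex_of_real r * cis t) * g (\<phi> (complex_of_real r * cis t)))^2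
            \<le> Np^2 * cmod (g (\<phi> (complex_of_real r * cis t)))^2"
          by (simp add: norm_mult power_mult_distrib mult_right_mono)
      qed
      also have "\<dots> = Np^2 * integral {0..2*pi} (\<lambda>t. cmod (g (\<phi> (complex_of_real r * cis t)))^2)"
        by simp
      also have "\<dots> \<le> Np^2 * (C * integral {0..2*pi} (\<lambda>t. cmod (g (complex_of_real b * cis t))^2))"
        using comp_mean[OF gcb phi_hol ub r] unfolding C_def a_def by (intro mult_left_mono) auto
      finally have I: "h2_mean (\<lambda>z. \<psi> z * g (\<phi> z)) r \<le> Np^2 * C * h2_mean g b"
        unfolding h2_mean_cis by (simp add: field_simps)
      have "h2_mean g b \<le> (fact n * Mx)^2 * h2_norm f ^ 2"
        unfolding g_def Mx_def N_def by (rule deriv_mean_bound[OF H b0 b1])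
      also have "\<dots> \<le> (fact n * Mx)^2"
      proof -
        have "h2_norm f ^ 2 \<le> 1" using f1 h2_norm_nonneg[OF H] by (simp add: power_le_one)
        then show ?thesis by (intro mult_left_le) auto
      qed
      finally have "Np^2 * C * h2_mean g b \<le> Np^2 * C * (fact n * Mx)^2"
        using C0 by (intro mult_left_mono) auto
      also have "\<dots> = B^2" using C0 by (simp add: B_def power_mult_distrib)
      finally show ?thesis using I by linarith
    qed
    have bdd: "bdd_above (h2_mean (\<lambda>z. \<psi> z * g (\<phi> z)) ` {0<..<1})"
      using mean by (auto intro!: bdd_aboveI)
    have H2: "in_H2 (\<lambda>z. \<psi> z * g (\<phi> z))" unfolding in_H2_def using holT bdd by simp
    have "(SUP r\<in>{0<..<1}. h2_mean (\<lambda>z. \<psi> z * g (\<phi> z)) r) \<le> B^2"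
      by (rule cSUP_least) (use mean in auto)
    then have "h2_norm (\<lambda>z. \<psi> z * g (\<phi> z)) \<le> sqrt (B^2)"
      unfolding h2_norm_def by (rule real_sqrt_le_mono)
    then show ?thesis using H2 B0 T by simp
  qed
  show ?thesis unfolding h2_opnorm_def
  proof (rule SUP_least)
    fix f assume "f \<in> {f. in_H2 f \<and> h2_norm f \<le> 1}"
    then have "in_H2 (wcd_op \<psi> \<phi> n f) \<and> h2_norm (wcd_op \<psi> \<phi> n f) \<le> B" using main by auto
    then show "(if in_H2 (wcd_op \<psi> \<phi> n f) then ereal (h2_norm (wcd_op \<psi> \<phi> n f)) else \<infinity>) \<le>
       ereal (fact n * Np * sqrt ((b + cmod (\<phi> 0)) / (b - cmod (\<phi> 0))) * (real (N choose n) * b^(N - n)))"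
      by (simp add: B_def C_def a_def Mx_def)
  qed
qed



lemma hinf_upper:
  assumes "bounded (f ` ball 0 1)" "z \<in> ball 0 1"
  shows "cmod (f z) \<le> hinf_norm f"
proof -
  obtain B where B: "\<And>x. x \<in> f ` ball 0 1 \<Longrightarrow> norm x \<le> B"
    using assms(1) unfolding bounded_iff by blast
  have "bdd_above ((\<lambda>z. cmod (f z)) ` ball 0 1)"
    using B by (auto intro!: bdd_aboveI)
  then show ?thesis unfolding hinf_norm_def by (rule cSUP_upper[OF assms(2)])
qed

lemma phi_strict:
  fixes \<phi> :: "complex \<Rightarrow> complex"
  assumes phi_hol: "\<phi> holomorphic_on ball 0 1"
    and phi_self: "\<phi> ` ball 0 1 \<subseteq> ball 0 1"
    and phi_nonconst: "\<not> (\<exists>c. \<forall>z\<in>ball 0 1. \<phi> z = c)"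
    and z: "z \<in> ball 0 1"
  shows "cmod (\<phi> z) < hinf_norm \<phi>"
proof (rule ccontr)
  assume "\<not> cmod (\<phi> z) < hinf_norm \<phi>"
  then have le: "hinf_norm \<phi> \<le> cmod (\<phi> z)" by simp
  have bd: "bounded (\<phi> ` ball 0 1)" using phi_self bounded_subset bounded_ball by blast
  have "\<phi> constant_on ball 0 1"
  proof (rule maximum_modulus_principle[OF phi_hol open_ball connected_ball open_ball subset_refl z])
    fix w :: complex assume "w \<in> ball 0 1"
    then show "cmod (\<phi> w) \<le> cmod (\<phi> z)" using hinf_upper[OF bd] le by (meson order_trans)
  qed
  then show False using phi_nonconst unfolding constant_on_def by blast
qed

lemma h2_mean_const: "h2_mean (\<lambda>_. c) r = cmod c ^ 2"
  unfolding h2_mean_def by simp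

lemma in_H2_const: "in_H2 (\<lambda>_. c)"
  unfolding in_H2_def h2_mean_const by auto

lemma h2_norm_const: "h2_norm (\<lambda>_. c) = cmod c"
  unfolding h2_norm_def h2_mean_const by simp

lemma h2_mean_pow: "r \<ge> 0 \<Longrightarrow> h2_mean (\<lambda>z. z ^ n) r = r ^ (2 * n)"
proof -
  assume r: "r \<ge> 0"
  have "cmod ((complex_of_real r * cis t) ^ n) ^ 2 = r ^ (2 * n)" for t
    using r by (simp add: norm_power norm_mult power_mult mult.commute flip: power_mult_distrib)
  then show ?thesis unfolding h2_mean_cis by simp
qed

lemma pow_H2: "in_H2 (\<lambda>z. z ^ n) \<and> h2_norm (\<lambda>z. z ^ n) = 1"
proof -
  have m: "h2_mean (\<lambda>z. z ^ n) r = r ^ (2 * n)" if "r \<in> {0<..<1}" for r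
    using that by (intro h2_mean_pow) auto
  have le1: "h2_mean (\<lambda>z. z ^ n) r \<le> 1" if "r \<in> {0<..<1}" for r
    using that by (simp add: m power_le_one)
  have bdd: "bdd_above (h2_mean (\<lambda>z. z ^ n) ` {0<..<1})"
    using le1 by (auto intro!: bdd_aboveI[where M=1])
  have H: "in_H2 (\<lambda>z. z ^ n)" unfolding in_H2_def using bdd by (auto intro!: holomorphic_intros)
  have S1: "(SUP r\<in>{0<..<1}. h2_mean (\<lambda>z. z ^ n) r) \<le> 1"
    by (rule cSUP_least) (use le1 in auto)
  have lim: "((\<lambda>r::real. r ^ (2 * n)) \<longlongrightarrow> 1 ^ (2 * n)) (at_left 1)"
    by (intro tendsto_intros)
  have ev: "eventually (\<lambda>r. r ^ (2 * n) \<le> (SUP r\<in>{0<..<1}. h2_mean (\<lambda>z. z ^ n) r)) (at_left (1::real))"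
  proof -
    have "eventually (\<lambda>r. r \<in> {0<..<1}) (at_left (1::real))"
      by (rule eventually_at_left_real) simp
    then show ?thesis
    proof eventually_elim
      case (elim r)
      then show ?case using cSUP_upper[OF elim bdd] m[OF elim] by simp
    qed
  qed
  have "1 ^ (2 * n) \<le> (SUP r\<in>{0<..<1}. h2_mean (\<lambda>z. z ^ n) r)"
    by (rule tendsto_upperbound[OF lim ev]) simp
  with S1 have "(SUP r\<in>{0<..<1}. h2_mean (\<lambda>z. z ^ n) r) = 1" by simp
  then show ?thesis using H unfolding h2_norm_def by simp
qed

lemma cd_lower:
  fixes \<phi> :: "complex \<Rightarrow> complex"
  shows "ereal (fact n) \<le> h2_opnorm (cd_op \<phi> n)"
proof -
  have d: "(deriv ^^ n) (\<lambda>z::complex. z ^ n) w = fact n" for w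
    using higher_deriv_power[of n 0 n w] by (simp add: pochhammer_fact)
  have T: "cd_op \<phi> n (\<lambda>z. z ^ n) = (\<lambda>_. fact n)"
    unfolding cd_op_def d ..
  have "(if in_H2 (cd_op \<phi> n (\<lambda>z. z ^ n)) then ereal (h2_norm (cd_op \<phi> n (\<lambda>z. z ^ n))) else \<infinity>)
      = ereal (fact n)"
    unfolding T by (simp add: in_H2_const h2_norm_const)
  moreover have "(if in_H2 (cd_op \<phi> n (\<lambda>z. z ^ n)) then ereal (h2_norm (cd_op \<phi> n (\<lambda>z. z ^ n))) else \<infinity>)
      \<le> h2_opnorm (cd_op \<phi> n)"
    unfolding h2_opnorm_def by (rule SUP_upper) (use pow_H2 in auto)
  ultimately show ?thesis by simp
qed


theorem proposition3p4:
  fixes n :: nat and \<phi> \<psi> :: "complex \<Rightarrow> complex"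
  assumes n_pos: "n \<ge> 1"
    and phi_hol: "\<phi> holomorphic_on ball 0 1"
    and phi_self: "\<phi> ` ball 0 1 \<subseteq> ball 0 1"
    and phi_nonconst: "\<not> (\<exists>c. \<forall>z\<in>ball 0 1. \<phi> z = c)"
    and phi_norm: "hinf_norm \<phi> < 1"
    and psi_Hinf: "in_Hinf \<psi>"
  shows "(\<forall>b::real. hinf_norm \<phi> \<le> b \<and> b < 1 \<longrightarrow>
           h2_opnorm (wcd_op \<psi> \<phi> n) \<le>
             ereal (fact n * hinf_norm \<psi> * sqrt ((b + cmod (\<phi> 0)) / (b - cmod (\<phi> 0)))
                    * real (nat \<lfloor>real n / (1 - b)\<rfloor> choose n)
                    * b ^ (nat \<lfloor>real n / (1 - b)\<rfloor> - n)))
       \<and> (hinf_norm \<phi> \<le> 1 / (real n + 1) \<and> \<phi> 0 = 0 \<longrightarrow>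
           h2_opnorm (cd_op \<phi> n) = ereal (fact n))"
proof (intro conjI allI impI)
  have strict: "\<And>z. z \<in> ball 0 1 \<Longrightarrow> cmod (\<phi> z) < hinf_norm \<phi>"
    by (rule phi_strict[OF phi_hol phi_self phi_nonconst])
  fix b :: real assume b: "hinf_norm \<phi> \<le> b \<and> b < 1"
  have ub: "\<And>z. z \<in> ball 0 1 \<Longrightarrow> cmod (\<phi> z) < b" using strict b by (meson less_le_trans)
  have psi_hol: "\<psi> holomorphic_on ball 0 1" and psi_bd: "bounded (\<psi> ` ball 0 1)"
    using psi_Hinf by (auto simp: in_Hinf_def)
  have psib: "\<And>z. z \<in> ball 0 1 \<Longrightarrow> cmod (\<psi> z) \<le> hinf_norm \<psi>"
    by (rule hinf_upper[OF psi_bd])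
  from main_bound[OF phi_hol ub _ psi_hol psib, of n] b
  show "h2_opnorm (wcd_op \<psi> \<phi> n) \<le>
             ereal (fact n * hinf_norm \<psi> * sqrt ((b + cmod (\<phi> 0)) / (b - cmod (\<phi> 0)))
                    * real (nat \<lfloor>real n / (1 - b)\<rfloor> choose n)
                    * b ^ (nat \<lfloor>real n / (1 - b)\<rfloor> - n))"
    by (simp only: mult.assoc)
next
  have strict: "\<And>z. z \<in> ball 0 1 \<Longrightarrow> cmod (\<phi> z) < hinf_norm \<phi>"
    by (rule phi_strict[OF phi_hol phi_self phi_nonconst])
  assume A: "hinf_norm \<phi> \<le> 1 / (real n + 1) \<and> \<phi> 0 = 0"
  define b where "b = 1 / (real n + 1)"
  have b0: "0 < b" and b1: "b < 1" using n_pos by (auto simp: b_def)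
  have ub: "\<And>z. z \<in> ball 0 1 \<Longrightarrow> cmod (\<phi> z) < b" using strict A unfolding b_def by (meson less_le_trans)
  have cd: "cd_op \<phi> n = wcd_op (\<lambda>_. 1) \<phi> n" unfolding cd_op_def wcd_op_def by simp
  have "h2_opnorm (wcd_op (\<lambda>_. 1) \<phi> n) \<le>
     ereal (fact n * 1 * sqrt ((b + cmod (\<phi> 0)) / (b - cmod (\<phi> 0)))
       * (real (nat \<lfloor>real n / (1 - b)\<rfloor> choose n) * b^(nat \<lfloor>real n / (1 - b)\<rfloor> - n)))"
    by (rule main_bound[OF phi_hol ub b1]) auto
  moreover have "real n / (1 - b) = real n + 1"
    using n_pos by (simp add: b_def field_simps)
  moreover have "sqrt ((b + cmod (\<phi> 0)) / (b - cmod (\<phi> 0))) = 1" using A b0 by simp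
  moreover have "real (Suc n choose n) * b ^ (Suc n - n) = 1" by (simp add: b_def)
  ultimately have "h2_opnorm (cd_op \<phi> n) \<le> ereal (fact n)"
    unfolding cd by (simp add: nat_add_distrib)
  then show "h2_opnorm (cd_op \<phi> n) = ereal (fact n)"
    using cd_lower[of n \<phi>] by (rule antisym)
qed


end
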